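(* For every integer $n\ge 2$ and $L=|\tau^n(a)|=2^{n+1}-1$, one has $\mathcal{C}(L)=2^{n+2}+2^n-2$.
   Context: Let $\mathcal{A}=\{a,x,y,z\}$ and let $\tau$ be the substitution (monoid morphism on finite words over $\mathcal{A}$) defined by $\tau(a)=axa$, $\tau(x)=y$, $\tau(y)=z$, $\tau(z)=x$. For a finite word $w$, $\mathrm{Sub}(w)$ denotes the set of finite (contiguous) subwords of $w$. Let $\mathrm{Sub}_\tau=\bigcup_{s\in\mathcal{A},\,n\in\mathbb{N}\cup\{0\}}\mathrm{Sub}(\tau^n(s))$. The word complexity is $\mathcal{C}(L)=$ the number of elements of $\mathrm{Sub}_\tau$ of length $L$. *)

theory Defs
  imports Main
begin

datatype letter = A | X | Y | Z

fun tau_letter :: "letter \<Rightarrow> letter list" where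
  "tau_letter A = [A, X, A]"
| "tau_letter X = [Y]"
| "tau_letter Y = [Z]"
| "tau_letter Z = [X]"

definition tau :: "letter list \<Rightarrow> letter list" where
  "tau w = concat (map tau_letter w)"

definition Sub :: "letter list \<Rightarrow> letter list set" where
  "Sub w = {v. \<exists>p s. w = p @ v @ s}"

definition Sub_tau :: "letter list set" where
  "Sub_tau = (\<Union>c. \<Union>n. Sub ((tau ^^ n) [c]))"

definition complexity :: "nat \<Rightarrow> nat" where
  "complexity L = card {v \<in> Sub_tau. length v = L}"

end

theory Submission
  imports Defs
begin

fun rot :: "letter \<Rightarrow> letter" where
 "rot A = X" | "rot X = Y" | "rot Y = Z" | "rot Z = X"
fun lf :: "nat \<Rightarrow> letter" where
 "lf j = (if j = 0 then A else if odd j then A else rot (lf (j div 2)))"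
declare lf.simps[simp del]
lemma lf_odd: "odd j \<Longrightarrow> lf j = A" by (subst lf.simps) auto
lemma lf_even: "even j \<Longrightarrow> 0 < j \<Longrightarrow> lf j = rot (lf (j div 2))" by (subst lf.simps) auto
lemma rot_ne: "rot x \<noteq> x" "rot x \<noteq> A" by (cases x; simp)+
lemma lf_mod: "0 < j mod 2^m \<Longrightarrow> lf j = lf (j mod 2^m)"
proof (induction m arbitrary: j)
  case 0 then show ?case by simp
next
  case (Suc m)
  show ?case
  proof (cases "odd j")
    case True
    then have "odd (j mod 2^Suc m)" by (simp add: odd_iff_mod_2_eq_one mod_mod_cancel)
    then show ?thesis using True lf_odd by metis
  next
    case False
    have e: "j mod 2^Suc m = 2 * ((j div 2) mod 2^m)"
      using mod_mult2_eq[of j 2 "2^m"] False by simp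
    with Suc.prems have pos: "0 < (j div 2) mod 2^m" by simp
    have "lf j = rot (lf (j div 2))" using False Suc.prems lf_even by (metis gr0I mod_0)
    also have "\<dots> = rot (lf ((j div 2) mod 2^m))" using Suc.IH[OF pos] by simp
    also have "\<dots> = lf (j mod 2^Suc m)" using e pos lf_even[of "2 * ((j div 2) mod 2^m)"] by simp
    finally show ?thesis .
  qed
qed
lemma lf_pow: "j mod 2^(Suc k) = 2^k \<Longrightarrow> lf j = (rot^^k) A"
proof (induction k arbitrary: j)
  case 0 then show ?case by (simp add: lf_odd odd_iff_mod_2_eq_one)
next
  case (Suc k)
  have d: "(2::nat) dvd 2^Suc (Suc k)" by simp
  have "even (j mod 2^Suc (Suc k))" using Suc.prems by simp
  then have ev: "even j" using dvd_mod_iff[OF d] by blast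
  have e: "j mod 2^Suc (Suc k) = 2 * ((j div 2) mod 2^Suc k)"
    using mod_mult2_eq[of j 2 "2^Suc k"] ev by simp
  with Suc.prems have "(j div 2) mod 2^Suc k = 2^k" by simp
  then have "lf (j div 2) = (rot^^k) A" by (rule Suc.IH)
  moreover have "j > 0" using Suc.prems by (metis gr0I mod_0 power_not_zero zero_neq_numeral)
  ultimately show ?case using lf_even ev by simp
qed

lemma exists_off: "0 < (m::nat) \<Longrightarrow> c < m \<Longrightarrow> \<exists>i<m. (p+i) mod m = c"
proof -
  assume m: "0 < m" "c < m"
  define i where "i = (c + m - p mod m) mod m"
  have "i < m" using m by (simp add: i_def)
  moreover have "(p+i) mod m = c"
  proof -
    have "(p+i) mod m = (p mod m + (c + m - p mod m)) mod m"
      by (simp add: i_def mod_add_right_eq mod_add_left_eq)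
    also have "p mod m + (c + m - p mod m) = c + m" using m
      by (metis add.commute le_add2 le_add_diff_inverse less_imp_le_nat mod_less_divisor order.trans)
    finally show ?thesis using m by simp
  qed
  ultimately show ?thesis by blast
qed

lemma bitflip:
  fixes a b M :: nat
  assumes "0 < M" "a mod M = b mod M" "a mod (2*M) \<noteq> b mod (2*M)"
  shows "b mod (2*M) = (a + M) mod (2*M)"
proof -
  have ea: "a mod (2*M) = M * (a div M mod 2) + a mod M" using mod_mult2_eq[of a M 2] by (simp add: mult.commute)
  have eb: "b mod (2*M) = M * (b div M mod 2) + b mod M" using mod_mult2_eq[of b M 2] by (simp add: mult.commute)
  have ec: "(a+M) mod (2*M) = M * ((a+M) div M mod 2) + (a+M) mod M" using mod_mult2_eq[of "a+M" M 2] by (simp add: mult.commute)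
  have d: "(a+M) div M = a div M + 1" using assms(1) div_add_self2[of M a] by simp
  have m: "(a+M) mod M = a mod M" by simp
  have ne: "b div M mod 2 \<noteq> a div M mod 2" using assms(2,3) ea eb by auto
  have h: "\<And>x y::nat. y mod 2 \<noteq> x mod 2 \<Longrightarrow> y mod 2 = (x+1) mod 2" by presburger
  have "b div M mod 2 = (a div M + 1) mod 2" using h[OF ne] .
  then show ?thesis using ea eb ec assms(2) d m by simp
qed

lemma rotpow_ne: "(rot^^Suc k) A \<noteq> (rot^^k) A" using rot_ne(1) by simp

lemma one_side:
  assumes "(p+i) mod 2^(k+2) = 2^(k+1)" "p mod 2^k = p' mod 2^k" "p mod 2^(k+1) \<noteq> p' mod 2^(k+1)"
  shows "lf (p+i) \<noteq> lf (p'+i)"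
proof -
  have l1: "lf (p+i) = (rot^^(k+1)) A" using assms(1) lf_pow[of "p+i" "k+1"] by simp
  have "(p+i) mod 2^(k+2) mod 2^(k+1) = (p+i) mod 2^(k+1)"
    by (simp add: mod_mod_cancel le_imp_power_dvd)
  then have z: "(p+i) mod 2^(k+1) = 0" using assms(1) by simp
  have bf: "p' mod 2^(k+1) = (p + 2^k) mod 2^(k+1)"
    using bitflip[of "2^k" p p'] assms(2,3) by simp
  have "(p'+i) mod 2^(k+1) = (p' mod 2^(k+1) + i) mod 2^(k+1)" by (simp add: mod_add_left_eq)
  also have "\<dots> = ((p + 2^k) mod 2^(k+1) + i) mod 2^(k+1)" using bf by simp
  also have "\<dots> = ((p+i) + 2^k) mod 2^(k+1)" by (metis mod_add_left_eq add.assoc add.commute)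
  also have "\<dots> = ((p+i) mod 2^(k+1) + 2^k) mod 2^(k+1)" by (simp add: mod_add_left_eq)
  also have "\<dots> = 2^k" using z by simp
  finally have "lf (p'+i) = (rot^^k) A" using lf_pow by simp
  then show ?thesis using l1 rotpow_ne by simp
qed


lemma mod_add_cancel_nat: "((a::nat) + c) mod m = (b + c) mod m \<Longrightarrow> a mod m = b mod m"
  by (simp add: nat_mod_eq_iff)

lemma recog_step:
  assumes eq: "\<forall>i<L. lf (p+i) = lf (p'+i)" and le: "2^(k+2) \<le> L + 1"
    and IH: "p mod 2^k = p' mod 2^k"
  shows "p mod 2^(k+1) = p' mod 2^(k+1)"
proof (rule ccontr)
  assume ne: "p mod 2^(k+1) \<noteq> p' mod 2^(k+1)"
  obtain i where i: "i < 2^(k+2)" "(p+i) mod 2^(k+2) = 2^(k+1)"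
    using exists_off[of "2^(k+2)" "2^(k+1)" p] by auto
  obtain j where j: "j < 2^(k+2)" "(p'+j) mod 2^(k+2) = 2^(k+1)"
    using exists_off[of "2^(k+2)" "2^(k+1)" p'] by auto
  show False
  proof (cases "i < L")
    case True
    then show False using one_side[OF i(2) IH ne] eq by blast
  next
    case False
    show False
    proof (cases "j < L")
      case True
      then show False using one_side[OF j(2) IH[symmetric]] ne eq by metis
    next
      case False
      with \<open>\<not> i < L\<close> i j le have "i = L" "j = L" by auto
      then have "p mod 2^(k+2) = p' mod 2^(k+2)" using i j mod_add_cancel_nat by metis
      then have "p mod 2^(k+2) mod 2^(k+1) = p' mod 2^(k+2) mod 2^(k+1)" by simp
      then show False using ne by (simp add: mod_mod_cancel le_imp_power_dvd)
    qed
  qed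
qed

lemma recog:
  assumes eq: "\<forall>i<2^(n+1)-1. lf (p+i) = lf (p'+i)" and "k \<le> n"
  shows "p mod 2^k = p' mod 2^k"
  using assms(2)
proof (induction k)
  case 0 then show ?case by simp
next
  case (Suc k)
  have "2^(k+2) \<le> (2::nat)^(n+1)" using Suc.prems by (intro power_increasing) auto
  then have "2^(k+2) \<le> (2^(n+1)-1) + (1::nat)" by simp
  from recog_step[OF eq this] Suc show ?case by simp
qed

lemma aux_ab: "(a::nat) < N \<Longrightarrow> b < N \<Longrightarrow> (a+b) mod N = 0 \<Longrightarrow> b = (N-a) mod N"
proof (cases "a + b < N")
  case True
  assume "(a+b) mod N = 0" then show ?thesis using True by simp
next
  case False
  assume h: "a < N" "b < N" "(a+b) mod N = 0"
  have "(a+b) mod N = (a+b-N) mod N" using False by (simp add: le_mod_geq)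
  also have "\<dots> = a+b-N" using h by simp
  finally have "a + b = N" using h False by simp
  then show ?thesis using h by (cases "a = 0") auto
qed
lemma mod_zero_off: "0 < (N::nat) \<Longrightarrow> (p+i) mod N = 0 \<Longrightarrow> i mod N = (N - p mod N) mod N"
  by (rule aux_ab) (simp_all add: mod_add_eq)

definition win :: "nat \<Rightarrow> nat \<Rightarrow> letter list" where
  "win n p = map lf [p..<p + (2^(n+1) - 1)]"
definition off :: "nat \<Rightarrow> nat \<Rightarrow> nat" where
  "off n r = (2^n - r) mod 2^n"
definition kap :: "nat \<Rightarrow> nat \<Rightarrow> nat \<times> letter \<times> letter" where
  "kap n p = (p mod 2^n, lf (p + off n (p mod 2^n)),
      if p mod 2^n = 1 then A else lf (p + off n (p mod 2^n) + 2^n))"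

lemma win_eq: "win n p = win n p' \<longleftrightarrow> (\<forall>i<2^(n+1)-1. lf (p+i) = lf (p'+i))"
  by (auto simp: win_def list_eq_iff_nth_eq)

lemma off_lt: "off n r < 2^n" by (simp add: off_def)

lemma off_small: "1 \<le> n \<Longrightarrow> r < 2^n \<Longrightarrow> r \<noteq> 1 \<Longrightarrow> off n r + 2^n < 2^(n+1) - 1"
proof -
  assume h: "1 \<le> n" "r < 2^n" "r \<noteq> 1"
  have N: "(2::nat) \<le> 2^n" using h(1) by (metis power_one_right power_increasing one_le_numeral)
  show ?thesis
  proof (cases "r = 0")
    case True then show ?thesis using N by (simp add: off_def)
  next
    case False
    then have "off n r = 2^n - r" using h by (simp add: off_def)
    then show ?thesis using h False N by simp
  qed
qed

lemma off_one: "1 \<le> n \<Longrightarrow> off n 1 = 2^n - 1"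
proof -
  assume "1 \<le> n"
  then have "(2::nat) \<le> 2^n" by (metis power_one_right power_increasing one_le_numeral)
  then show ?thesis by (simp add: off_def)
qed

lemma kap_iff:
  assumes n: "1 \<le> n"
  shows "win n p = win n p' \<longleftrightarrow> kap n p = kap n p'"
proof
  assume "win n p = win n p'"
  then have eq: "\<forall>i<2^(n+1)-1. lf (p+i) = lf (p'+i)" by (simp add: win_eq)
  have r: "p mod 2^n = p' mod 2^n" using recog[OF eq] by simp
  define q where "q = off n (p mod 2^n)"
  have "q < 2^n" by (simp add: q_def off_lt)
  then have "q < 2^(n+1) - 1" by simp
  then have 1: "lf (p+q) = lf (p'+q)" using eq by blast
  have 2: "lf (p+q+2^n) = lf (p'+q+2^n)" if "p mod 2^n \<noteq> 1"
    using off_small[OF n _ that] eq q_def by (simp add: add.assoc)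
  show "kap n p = kap n p'" using 1 2 r by (simp add: kap_def q_def)
next
  assume k: "kap n p = kap n p'"
  have r: "p mod 2^n = p' mod 2^n" using k by (simp add: kap_def)
  define q where "q = off n (p mod 2^n)"
  have 1: "lf (p+q) = lf (p'+q)" using k r by (simp add: kap_def q_def)
  have h2: "lf (p+q+2^n) = lf (p'+q+2^n)" if "p mod 2^n \<noteq> 1"
    using k r that by (simp add: kap_def q_def)
  have "\<forall>i<2^(n+1)-1. lf (p+i) = lf (p'+i)"
  proof (intro allI impI)
    fix i :: nat assume i: "i < 2^(n+1) - 1"
    show "lf (p+i) = lf (p'+i)"
    proof (cases "(p+i) mod 2^n = 0")
      case False
      have e: "(p'+i) mod 2^n = (p+i) mod 2^n" using r by (metis mod_add_left_eq)
      have a: "lf (p+i) = lf ((p+i) mod 2^n)" by (rule lf_mod) (use False in simp)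
      have b: "lf (p'+i) = lf ((p'+i) mod 2^n)" by (rule lf_mod) (use False e in simp)
      show ?thesis using a b e by simp
    next
      case True
      have im: "i mod 2^n = q" using mod_zero_off[OF _ True] by (simp add: q_def off_def)
      have "i div 2^n < 2" using i by (simp add: div_less_iff_less_mult)
      then consider "i div 2^n = 0" | "i div 2^n = 1" by linarith
      then show ?thesis
      proof cases
        case 1
        then have "i = q" using im div_mult_mod_eq[of i "2^n"] by simp
        then show ?thesis using \<open>lf (p+q) = lf (p'+q)\<close> by simp
      next
        case 2
        then have io: "i = q + 2^n" using im div_mult_mod_eq[of i "2^n"] by simp
        have "p mod 2^n \<noteq> 1"
        proof
          assume "p mod 2^n = 1"
          then have "q = 2^n - 1" using off_one[OF n] by (simp add: q_def)
          then show False using io i by simp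
        qed
        then show ?thesis using h2 io by (simp add: add.assoc)
      qed
    qed
  qed
  then show "win n p = win n p'" by (simp add: win_eq)
qed


lemma card_kernel:
  assumes "\<forall>x\<in>P. \<forall>y\<in>P. f x = f y \<longleftrightarrow> g x = g y"
  shows "card (f ` P) = card (g ` P)"
proof -
  define h where "h = (\<lambda>y. g (SOME x. x \<in> P \<and> f x = y))"
  have hf: "h (f x) = g x" if "x \<in> P" for x
  proof -
    have ex: "\<exists>x'. x' \<in> P \<and> f x' = f x" using that by blast
    have "(SOME x'. x' \<in> P \<and> f x' = f x) \<in> P \<and> f (SOME x'. x' \<in> P \<and> f x' = f x) = f x"
      by (rule someI_ex[OF ex])
    then show ?thesis using assms that unfolding h_def by blast
  qed
  have "inj_on h (f ` P)"
    by (auto simp: inj_on_def hf) (use assms in blast)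
  moreover have "h ` (f ` P) = g ` P" using hf by (auto simp: image_image)
  ultimately show ?thesis by (metis card_image)
qed

lemma rot_XYZ: "rot x \<in> {X,Y,Z}" by (cases x) auto
lemma lf_even_XYZ: "even j \<Longrightarrow> 0 < j \<Longrightarrow> lf j \<in> {X,Y,Z}" using lf_even rot_XYZ by simp
lemma rotpow_XYZ: "1 \<le> k \<Longrightarrow> (rot^^k) A \<in> {X,Y,Z}"
  using rot_XYZ by (cases k) auto
lemma cover:
  assumes "1 \<le> m" "d \<in> {X,Y,Z}" shows "\<exists>e. (rot^^(m+e)) A = d"
proof -
  have x: "(rot^^m) A \<in> {X,Y,Z}" using rotpow_XYZ assms(1) by blast
  have s: "(rot^^(m+e)) A = (rot^^e) ((rot^^m) A)" for e by (metis funpow_add add.commute comp_apply)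
  show ?thesis using x assms(2)
    apply (simp only: s)
    apply (cases "(rot^^m) A"; cases d; simp)
    by (metis funpow_0 funpow_Suc_right comp_apply rot.simps One_nat_def numeral_2_eq_2 numeral_3_eq_3)+
qed
lemma lf_oddmult: "odd m \<Longrightarrow> lf (2^k * m) = (rot^^k) A"
proof -
  assume "odd m"
  have "(2^k * m) mod (2^k * 2) = 2^k * (m mod 2)" by (rule mod_mult_mult1)
  then have "(2^k * m) mod 2^Suc k = 2^k" using \<open>odd m\<close> by (simp add: odd_iff_mod_2_eq_one mult.commute)
  then show ?thesis by (rule lf_pow)
qed

lemma N2: "1 \<le> n \<Longrightarrow> (2::nat) \<le> 2^n"
  by (metis power_one_right power_increasing one_le_numeral)

lemma off_add_mod: "(p + off n (p mod 2^n)) mod 2^n = 0"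
proof -
  have "(p + off n (p mod 2^n)) mod 2^n = (p mod 2^n + (2^n - p mod 2^n)) mod 2^n"
    unfolding off_def by (metis mod_add_eq mod_mod_trivial)
  also have "p mod 2^n + (2^n - p mod 2^n) = 2^n"
    by (simp add: less_imp_le_nat)
  finally show ?thesis by simp
qed

lemma realize:
  assumes n: "1 \<le> n" and r: "r < 2^n" and m: "1 \<le> m"
  shows "\<exists>p\<ge>1. p mod 2^n = r \<and> p + off n r = 2^n * m"
proof (cases "r = 0")
  case True
  then show ?thesis using m by (intro exI[of _ "2^n * m"]) (simp add: off_def)
next
  case False
  have o: "off n r = 2^n - r" using False r by (simp add: off_def)
  obtain m' where m': "m = Suc m'" using m by (cases m) auto
  define p where "p = 2^n * m' + r"
  have "p mod 2^n = r" using r by (simp add: p_def)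
  moreover have "p + off n r = 2^n * m" using o r by (simp add: p_def m')
  moreover have "p \<ge> 1" using False by (simp add: p_def)
  ultimately show ?thesis by blast
qed

definition K :: "nat \<Rightarrow> (nat \<times> letter \<times> letter) set" where
  "K n = ({1} \<times> ((\<lambda>d. (d, A)) ` {X,Y,Z})) \<union>
     ({r. r < 2^n \<and> r \<noteq> 1} \<times> ((\<lambda>d. ((rot^^n) A, d)) ` {X,Y,Z} \<union> (\<lambda>d. (d, (rot^^n) A)) ` {X,Y,Z}))"

lemma kap_sub: assumes n: "1 \<le> n" and p: "1 \<le> p" shows "kap n p \<in> K n"
proof -
  define r where "r = p mod 2^n"
  define a where "a = p + off n r"
  have r2: "r < 2^n" by (simp add: r_def)
  have am: "a mod 2^n = 0" unfolding a_def r_def by (rule off_add_mod)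
  have apos: "0 < a" using p by (simp add: a_def)
  have "(2::nat) dvd 2^n" using n by (simp add: dvd_power)
  moreover have "2^n dvd a" using am by auto
  ultimately have aev: "even a" by (rule dvd_trans)
  have aN_ev: "even (a + 2^n)" using aev \<open>(2::nat) dvd 2^n\<close> by simp
  have k: "kap n p = (r, lf a, if r = 1 then A else lf (a + 2^n))"
    by (simp add: kap_def r_def a_def)
  show ?thesis
  proof (cases "r = 1")
    case True
    then show ?thesis using k lf_even_XYZ[OF aev apos] by (auto simp: K_def)
  next
    case False
    have am2: "a mod (2^n * 2) = 2^n * (a div 2^n mod 2)" using mod_mult2_eq[of a "2^n" 2] am by simp
    show ?thesis
    proof (cases "a div 2^n mod 2 = 1")
      case True
      then have "a mod 2^Suc n = 2^n" using am2 by (simp add: mult.commute)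
      then have "lf a = (rot^^n) A" by (rule lf_pow)
      then show ?thesis using k False r2 lf_even_XYZ[OF aN_ev] apos by (auto simp: K_def)
    next
      case b: False
      then have "a mod 2^Suc n = 0" using am2 by (simp add: mult.commute)
      then have "(a + 2^n) mod 2^Suc n = 2^n" by (simp add: mod_add_left_eq[symmetric])
      then have "lf (a + 2^n) = (rot^^n) A" by (rule lf_pow)
      then show ?thesis using k False r2 lf_even_XYZ[OF aev apos] by (auto simp: K_def)
    qed
  qed
qed

lemma kap_realize:
  assumes n: "1 \<le> n" and r: "r < 2^n" and m: "1 \<le> m"
  shows "\<exists>p\<ge>1. kap n p = (r, lf (2^n * m), if r = 1 then A else lf (2^n * m + 2^n))"
proof -
  obtain p where p: "p \<ge> 1" "p mod 2^n = r" "p + off n r = 2^n * m" using realize[OF n r m] by blast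
  then show ?thesis by (intro exI[of _ p]) (simp add: kap_def)
qed

lemma K_sub: assumes n: "1 \<le> n" shows "K n \<subseteq> kap n ` {p. 1 \<le> p}"
proof
  fix t assume "t \<in> K n"
  then consider (a) d where "d \<in> {X,Y,Z}" "t = (1, d, A)"
    | (b) r d where "r < 2^n" "r \<noteq> 1" "d \<in> {X,Y,Z}" "t = (r, (rot^^n) A, d)"
    | (c) r d where "r < 2^n" "r \<noteq> 1" "d \<in> {X,Y,Z}" "t = (r, d, (rot^^n) A)"
    unfolding K_def by blast
  then show "t \<in> kap n ` {p. 1 \<le> p}"
  proof cases
    case a
    obtain e where e: "(rot^^(n+e)) A = d" using cover[OF n a(1)] by blast
    have "1 < (2::nat)^n" using N2[OF n] by simp
    then obtain p where p: "p \<ge> 1" "kap n p = (1, lf (2^n * 2^e), A)"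
      using kap_realize[OF n, of 1 "2^e"] by auto
    have "lf (2^n * 2^e) = d" using lf_oddmult[of 1 "n+e"] e by (simp add: power_add)
    then show ?thesis using p a by force
  next
    case b
    obtain e where e: "(rot^^(n+1+e)) A = d" using cover[of "n+1"] b(3) by auto
    define m where "m = 2^(e+1) - (1::nat)"
    have t: "(2::nat) \<le> 2 * 2^e" by simp
    have "m = 2 * 2^e - 1" by (simp add: m_def)
    then have m1: "1 \<le> m" using t by linarith
    have "odd m" by (simp add: m_def)
    then have l1: "lf (2^n * m) = (rot^^n) A" by (rule lf_oddmult)
    have "2^n * m + 2^n = 2^(n+1+e) * 1" by (simp add: m_def power_add algebra_simps)
    then have l2: "lf (2^n * m + 2^n) = d" using lf_oddmult[of 1 "n+1+e"] e by simp
    obtain p where "p \<ge> 1" "kap n p = (r, lf (2^n * m), if r = 1 then A else lf (2^n * m + 2^n))"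
      using kap_realize[OF n b(1) m1] by blast
    then show ?thesis using l1 l2 b by force
  next
    case c
    obtain e where e: "(rot^^(n+1+e)) A = d" using cover[of "n+1"] c(3) by auto
    define m :: nat where "m = 2^(e+1)"
    have m1: "1 \<le> m" by (simp add: m_def)
    have "2^n * m = 2^(n+1+e) * 1" by (simp add: m_def power_add)
    then have l1: "lf (2^n * m) = d" using lf_oddmult[of 1 "n+1+e"] e by simp
    have e2: "2^n * m + 2^n = 2^n * (m + 1)" by simp
    have "odd (m+1)" by (simp add: m_def)
    then have l2: "lf (2^n * m + 2^n) = (rot^^n) A" unfolding e2 by (rule lf_oddmult)
    obtain p where "p \<ge> 1" "kap n p = (r, lf (2^n * m), if r = 1 then A else lf (2^n * m + 2^n))"
      using kap_realize[OF n c(1) m1] by blast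
    then show ?thesis using l1 l2 c by force
  qed
qed

lemma card_K: assumes n: "1 \<le> n" shows "card (K n) = 3 + (2^n - 1) * 5"
proof -
  define c where "c = (rot^^n) A"
  have cX: "c \<in> {X,Y,Z}" using rotpow_XYZ n by (simp add: c_def)
  have c1: "card ((\<lambda>d. (d, A)) ` {X,Y,Z}) = 3" by simp
  have c2: "card ((\<lambda>d. (c, d)) ` {X,Y,Z} \<union> (\<lambda>d. (d, c)) ` {X,Y,Z}) = 5"
    using cX by (auto simp: card_insert_if)
  have R: "{r. r < 2^n \<and> r \<noteq> 1} = {..<2^n} - {1::nat}" by auto
  have c3: "card {r. r < 2^n \<and> r \<noteq> (1::nat)} = 2^n - 1"
    unfolding R by (subst card_Diff_singleton) (use N2[OF n] in auto)
  have fR: "finite {r::nat. r < 2^n \<and> r \<noteq> 1}" unfolding R by simp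
  have d: "{1::nat} \<times> ((\<lambda>d. (d, A)) ` {X,Y,Z}) \<inter>
      {r::nat. r < 2^n \<and> r \<noteq> 1} \<times> ((\<lambda>d. (c, d)) ` {X,Y,Z} \<union> (\<lambda>d. (d, c)) ` {X,Y,Z}) = {}"
    by blast
  have "card (K n) = card ({1::nat} \<times> ((\<lambda>d. (d, A)) ` {X,Y,Z})) +
      card ({r::nat. r < 2^n \<and> r \<noteq> 1} \<times> ((\<lambda>d. (c, d)) ` {X,Y,Z} \<union> (\<lambda>d. (d, c)) ` {X,Y,Z}))"
    unfolding K_def c_def[symmetric] by (rule card_Un_disjoint) (use d fR in auto)
  also have "\<dots> = 3 + (2^n - 1) * 5" using c1 c2 c3 by (simp add: card_cartesian_product)
  finally show ?thesis .
qed

lemma tau_append: "tau (u @ v) = tau u @ tau v" by (simp add: tau_def)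
lemma taun_append: "(tau^^n) (u @ v) = (tau^^n) u @ (tau^^n) v"
  by (induction n) (simp_all add: tau_append)
lemma tau_single: "d \<noteq> A \<Longrightarrow> tau [d] = [rot d]" by (cases d) (simp_all add: tau_def)
lemma tauX: "(tau^^n) [X] = [(rot^^(Suc n)) A]"
proof (induction n)
  case 0 then show ?case by (simp add: tau_def)
next
  case (Suc n)
  have "(tau^^Suc n) [X] = tau [(rot^^(Suc n)) A]" using Suc by simp
  also have "\<dots> = [rot ((rot^^(Suc n)) A)]" by (rule tau_single) (simp add: rot_ne)
  finally show ?case by simp
qed
lemma tau_nonA: "c \<noteq> A \<Longrightarrow> \<exists>d. (tau^^n) [c] = [d] \<and> d \<noteq> A"
proof (induction n)
  case 0 then show ?case by simp
next
  case (Suc n)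
  then obtain d where "(tau^^n) [c] = [d]" "d \<noteq> A" by blast
  then show ?case using tau_single rot_ne by simp
qed

lemma W: "(tau^^n) [A] = map lf [1..<2^(n+1)]"
proof (induction n)
  case 0 then show ?case by (simp add: tau_def numeral_2_eq_2 lf.simps)
next
  case (Suc n)
  define N where "N = (2::nat)^(n+1)"
  have N1: "1 \<le> N" by (simp add: N_def)
  have "(tau^^Suc n) [A] = (tau^^n) (tau [A])" by (simp only: funpow_Suc_right comp_apply)
  also have "tau [A] = [A] @ [X] @ [A]" by (simp add: tau_def)
  also have "(tau^^n) ([A] @ [X] @ [A]) = map lf [1..<N] @ [(rot^^(Suc n)) A] @ map lf [1..<N]"
    by (simp only: taun_append tauX Suc N_def)
  also have "\<dots> = map lf [1..<2^(Suc n + 1)]"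
  proof -
    have e: "(2::nat)^(Suc n+1) = N + N" by (simp add: N_def)
    have s1: "[1..<N+N] = [1..<N] @ [N..<N+N]" using N1 by (rule upt_add_eq_append)
    have s2: "[N..<N+N] = N # [Suc N..<N+N]" using N1 by (intro upt_conv_Cons) simp
    have s: "[1..<2^(Suc n+1)] = [1..<N] @ [N] @ [N+1..<N+N]" unfolding e s1 s2 by simp
    have lN: "lf N = (rot^^(Suc n)) A" unfolding N_def by (rule lf_pow) simp
    have m: "map lf [N+1..<N+N] = map lf [1..<N]"
    proof (rule nth_equalityI)
      show "length (map lf [N+1..<N+N]) = length (map lf [1..<N])" by simp
    next
      fix i assume "i < length (map lf [N+1..<N+N])"
      then have i: "i < N - 1" by simp
      have "(N+1+i) mod N = (1+i) mod N" by (metis add.assoc mod_add_self1)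
      also have "\<dots> = 1 + i" using i by simp
      finally have "(N+1+i) mod N = 1 + i" .
      then have p: "(N + 1 + i) mod 2^(n+1) > 0" unfolding N_def by simp
      have "lf (N+1+i) = lf ((N + 1 + i) mod 2^(n+1))" using lf_mod[OF p] .
      then have "lf (N+1+i) = lf (1+i)" using \<open>(N+1+i) mod N = 1 + i\<close> unfolding N_def by simp
      then show "map lf [N+1..<N+N] ! i = map lf [1..<N] ! i" using i by simp
    qed
    show ?thesis using s lN m by simp
  qed
  finally show ?case .
qed

lemma Sub_alt: "v \<in> Sub w \<longleftrightarrow> (\<exists>i. i + length v \<le> length w \<and> v = take (length v) (drop i w))"
proof
  assume "v \<in> Sub w"
  then obtain p s where "w = p @ v @ s" by (auto simp: Sub_def)
  then show "\<exists>i. i + length v \<le> length w \<and> v = take (length v) (drop i w)"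
    by (intro exI[of _ "length p"]) simp
next
  assume "\<exists>i. i + length v \<le> length w \<and> v = take (length v) (drop i w)"
  then obtain i where i: "i + length v \<le> length w" "v = take (length v) (drop i w)" by blast
  have "w = take i w @ take (length v) (drop i w) @ drop (length v) (drop i w)" by (metis append_take_drop_id)
  then have "w = take i w @ v @ drop (length v) (drop i w)" using i(2) by simp
  then show "v \<in> Sub w" unfolding Sub_def by blast
qed

lemma Sub_W: assumes N: "1 \<le> N" shows "v \<in> Sub (map lf [1..<N]) \<longleftrightarrow> (\<exists>p\<ge>1. p + length v \<le> N \<and> v = map lf [p..<p + length v])"
proof -
  have t: "take l (drop i (map lf [1..<N])) = map lf [1+i..<1+i+l]" if "i + l \<le> N - 1" for i l
    using that by (simp add: drop_map take_map)
  show ?thesis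
  proof
    assume "v \<in> Sub (map lf [1..<N])"
    then obtain i where i: "i + length v \<le> N - 1" "v = take (length v) (drop i (map lf [1..<N]))"
      unfolding Sub_alt by auto
    then have "v = map lf [1+i..<1+i+length v]" using t by simp
    then show "\<exists>p\<ge>1. p + length v \<le> N \<and> v = map lf [p..<p + length v]"
      using i(1) N by (intro exI[of _ "1+i"]) auto
  next
    assume "\<exists>p\<ge>1. p + length v \<le> N \<and> v = map lf [p..<p + length v]"
    then obtain p where p: "p \<ge> 1" "p + length v \<le> N" "v = map lf [p..<p + length v]" by blast
    have "p - 1 + length v \<le> N - 1" using p by simp
    moreover have "v = take (length v) (drop (p-1) (map lf [1..<N]))" using t[OF calculation] p by simp
    ultimately show "v \<in> Sub (map lf [1..<N])" unfolding Sub_alt by (intro exI[of _ "p-1"]) simp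
  qed
qed

lemma set_eq:
  assumes n: "1 \<le> n"
  shows "{v \<in> Sub_tau. length v = 2^(n+1) - 1} = win n ` {p. 1 \<le> p}"
proof -
  define L where "L = (2::nat)^(n+1) - 1"
  have "(2::nat)^2 \<le> 2^(n+1)" using n by (intro power_increasing) auto
  then have L2: "2 \<le> L" unfolding L_def by simp
  show ?thesis unfolding L_def[symmetric]
  proof
    show "{v \<in> Sub_tau. length v = L} \<subseteq> win n ` {p. 1 \<le> p}"
    proof
      fix v assume v: "v \<in> {v \<in> Sub_tau. length v = L}"
      then obtain c m where cm: "v \<in> Sub ((tau^^m) [c])" "length v = L" unfolding Sub_tau_def by auto
      show "v \<in> win n ` {p. 1 \<le> p}"
      proof (cases "c = A")
        case False
        then obtain d where "(tau^^m) [c] = [d]" using tau_nonA by blast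
        then have "length v \<le> 1" using cm(1) unfolding Sub_def by (force dest: arg_cong[where f=length])
        then show ?thesis using cm(2) L2 by simp
      next
        case True
        then obtain p where "p \<ge> 1" "v = map lf [p..<p + L]"
          using cm W Sub_W[of "2^(m+1)"] by auto
        then show ?thesis by (auto simp: win_def L_def)
      qed
    qed
  next
    show "win n ` {p. 1 \<le> p} \<subseteq> {v \<in> Sub_tau. length v = L}"
    proof
      fix v assume "v \<in> win n ` {p. 1 \<le> p}"
      then obtain p where p: "p \<ge> 1" "v = map lf [p..<p+L]" by (auto simp: win_def L_def)
      define m where "m = p + L"
      have "m + 1 < 2^(m+1)" by (rule less_exp)
      then have "p + L \<le> 2^(m+1)" unfolding m_def by linarith
      then have "p + length v \<le> 2^(m+1)" using p by simp
      then have "v \<in> Sub (map lf [1..<2^(m+1)])" using Sub_W[of "2^(m+1)"] p by auto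
      then have "v \<in> Sub ((tau^^m) [A])" using W by simp
      then show "v \<in> {v \<in> Sub_tau. length v = L}" using p unfolding Sub_tau_def by auto
    qed
  qed
qed

theorem mainTheorem6:
  fixes n :: nat
  assumes "n \<ge> 2"
  shows "length ((tau ^^ n) [A]) = 2 ^ (n + 1) - 1
         \<and> complexity (2 ^ (n + 1) - 1) = 2 ^ (n + 2) + 2 ^ n - 2"
proof
  have n: "1 \<le> n" using assms by simp
  show "length ((tau ^^ n) [A]) = 2 ^ (n + 1) - 1" by (simp add: W)
  have "complexity (2 ^ (n + 1) - 1) = card (win n ` {p. 1 \<le> p})"
    unfolding complexity_def using set_eq[OF n] by simp
  also have "\<dots> = card (kap n ` {p. 1 \<le> p})"
    by (rule card_kernel) (use kap_iff[OF n] in blast)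
  also have "kap n ` {p. 1 \<le> p} = K n" using kap_sub[OF n] K_sub[OF n] by blast
  also have "card (K n) = 3 + (2^n - 1) * 5" by (rule card_K[OF n])
  also have "\<dots> = 2 ^ (n + 2) + 2 ^ n - 2"
  proof -
    have "(1::nat) \<le> 2^n" by simp
    moreover have "(2::nat)^(n+2) = 4 * 2^n" by (simp add: power_add)
    ultimately show ?thesis by linarith
  qed
  finally show "complexity (2 ^ (n + 1) - 1) = 2 ^ (n + 2) + 2 ^ n - 2" .
qed

end
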